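(* Let $\mathbf K\in\mathcal T_h$ with invertible affine map $T_{\mathbf K}:\widehat{\mathbf K}\to\mathbf K$, and let $w\in\mathcal{NC}_0^h$. Put $\hat w=w|_{\mathbf K}\circ T_{\mathbf K}\in\widehat{\mathbb P}^{(1)}_{SK}$. Then for each $i\in\{1,2,3\}$, writing $\hat y$ for the pair of coordinates other than $\hat x_i$, the functions $$\hat y\mapsto \hat w|_{\hat x_i=1}(\hat y)-\bigl(\widehat{\mathcal I}^{x_i^+}\hat w\bigr)(\hat y)\quad\text{and}\quad \hat y\mapsto \hat w|_{\hat x_i=-1}(\hat y)-\bigl(\widehat{\mathcal I}^{x_i^-}\hat w\bigr)(\hat y),\qquad \hat y\in[-1,1]^2,$$ coincide; equivalently, $w|_{F_{\mathbf K}^{x_i^+}}-\mathcal I_F^{x_i^+}(w|_{\mathbf K})$ and $w|_{F_{\mathbf K}^{x_i^-}}-\mathcal I_F^{x_i^-}(w|_{\mathbf K})$ agree at corresponding points $T_{\mathbf K}(\hat x)$ of the two opposite faces (points with the same $\hat y$).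
   Context: Let $\widehat{\mathbf K}=[-1,1]^3$ with coordinates $(\hat x_1,\hat x_2,\hat x_3)$; $P_2$ denotes polynomials of total degree at most $2$, and $\widehat{\mathbb P}^{(1)}_{SK}=P_2\oplus\mathrm{Span}\{\hat x_1\hat x_2\hat x_3,\hat x_1^2\hat x_2,\hat x_2^2\hat x_3,\hat x_3^2\hat x_1\}$. Let $\Omega\subset\mathbb R^3$ be a parallelepiped domain with boundary $\Gamma$, $\mathcal T_h$ a partition of $\Omega$ into parallelepipeds, each $\mathbf K=T_{\mathbf K}(\widehat{\mathbf K})$ with $T_{\mathbf K}$ invertible affine; $\mathcal{NC}_0^h$ is the space of functions $\phi$ with $\phi|_{\mathbf K}\circ T_{\mathbf K}\in\widehat{\mathbb P}^{(1)}_{SK}$ for all $\mathbf K$, continuous at all element vertices and face-centroids, and vanishing at those on $\Gamma$. Face interpolation: on the faces $\hat x_1=\pm1$ of $\widehat{\mathbf K}$ use the space $\mathrm{Span}\{1,\hat x_2,\hat x_3,\hat x_2\hat x_3,\hat x_3^2\}$; on the faces $\hat x_2=\pm1$ the space $\mathrm{Span}\{1,\hat x_3,\hat x_1,\hat x_3\hat x_1,\hat x_1^2\}$; on the faces $\hat x_3=\pm1$ the space $\mathrm{Span}\{1,\hat x_1,\hat x_2,\hat x_1\hat x_2,\hat x_2^2\}$. For a continuous $g$ on $\widehat{\mathbf K}$, $\widehat{\mathcal I}^{x_i^\pm}g$ is the unique element of the corresponding space (a function of the two coordinates other than $\hat x_i$) that agrees with $g$ at the four vertices and at the centroid of the face $\hat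 x_i=\pm1$. On $\mathbf K$, $F_{\mathbf K}^{x_i^\pm}=T_{\mathbf K}(\{\hat x_i=\pm1\})$ and $\mathcal I_F^{x_i^\pm}(w|_{\mathbf K})=(\widehat{\mathcal I}^{x_i^\pm}(w|_{\mathbf K}\circ T_{\mathbf K}))\circ T_{\mathbf K}^{-1}$ on that face. *)

theory Defs
  imports "HOL-Analysis.Analysis"
begin

definition Kref :: "(real^3) set" where
  "Kref = {x. \<forall>j. \<bar>x $ j\<bar> \<le> 1}"

definition affine_invertible :: "(real^3 \<Rightarrow> real^3) \<Rightarrow> bool" where
  "affine_invertible T \<longleftrightarrow> (\<exists>A b. invertible (A :: real^3^3) \<and> (\<forall>x. T x = A *v x + b))"

definition in_PSK :: "(real^3 \<Rightarrow> real) \<Rightarrow> bool" where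
  "in_PSK f \<longleftrightarrow> (\<exists>c :: nat \<Rightarrow> real. \<forall>x\<in>Kref.
     f x = c 0 + c 1 * x$1 + c 2 * x$2 + c 3 * x$3
         + c 4 * (x$1)^2 + c 5 * (x$2)^2 + c 6 * (x$3)^2
         + c 7 * x$1 * x$2 + c 8 * x$2 * x$3 + c 9 * x$3 * x$1
         + c 10 * x$1 * x$2 * x$3 + c 11 * (x$1)^2 * x$2
         + c 12 * (x$2)^2 * x$3 + c 13 * (x$3)^2 * x$1)"

text \<open>Point on the face x_i = sigma of Kref, with the other coordinates
  (x_{i+1}, x_{i+2}) (cyclically) equal to (s,t).  For i=1: (x2,x3); i=2: (x3,x1); i=3: (x1,x2).\<close>
definition facepoint :: "3 \<Rightarrow> real \<Rightarrow> real \<Rightarrow> real \<Rightarrow> real^3" where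
  "facepoint i \<sigma> s t = (\<chi> j. if j = i then \<sigma> else if j = i + 1 then s else t)"

definition face_space :: "(real \<Rightarrow> real \<Rightarrow> real) set" where
  "face_space = {f. \<exists>c0 c1 c2 c3 c4. \<forall>s t. f s t = c0 + c1 * s + c2 * t + c3 * s * t + c4 * t^2}"

definition face_interp :: "3 \<Rightarrow> real \<Rightarrow> (real^3 \<Rightarrow> real) \<Rightarrow> real \<Rightarrow> real \<Rightarrow> real" where
  "face_interp i \<sigma> g = (THE f. f \<in> face_space
      \<and> (\<forall>s\<in>{-1,1}. \<forall>t\<in>{-1,1}. f s t = g (facepoint i \<sigma> s t))
      \<and> f 0 0 = g (facepoint i \<sigma> 0 0))"

definition parallelepiped :: "(real^3) set \<Rightarrow> bool" where
  "parallelepiped \<Omega> \<longleftrightarrow> (\<exists>S. affine_invertible S \<and> \<Omega> = S ` Kref)"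

text \<open>A partition of Omega into parallelepipeds, each element given by its affine map T_K.\<close>
definition partition_pp :: "(real^3) set \<Rightarrow> (real^3 \<Rightarrow> real^3) set \<Rightarrow> bool" where
  "partition_pp \<Omega> Th \<longleftrightarrow> finite Th \<and> (\<forall>T\<in>Th. affine_invertible T)
     \<and> \<Union>((\<lambda>T. T ` Kref) ` Th) = \<Omega>
     \<and> (\<forall>T1\<in>Th. \<forall>T2\<in>Th. T1 \<noteq> T2 \<longrightarrow> interior (T1 ` Kref) \<inter> interior (T2 ` Kref) = {})"

definition nodes :: "(real^3 \<Rightarrow> real^3) \<Rightarrow> (real^3) set" where
  "nodes T = T ` ({x. \<forall>j. x$j \<in> {-1,1}}
                 \<union> {x. \<exists>j. x$j \<in> {-1,1} \<and> (\<forall>k. k \<noteq> j \<longrightarrow> x$k = 0)})"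

text \<open>A nonconforming function is given elementwise: w T is w restricted to the element T ` Kref.\<close>
definition NC0h :: "(real^3) set \<Rightarrow> (real^3 \<Rightarrow> real^3) set
                     \<Rightarrow> ((real^3 \<Rightarrow> real^3) \<Rightarrow> real^3 \<Rightarrow> real) \<Rightarrow> bool" where
  "NC0h \<Omega> Th w \<longleftrightarrow>
     (\<forall>T\<in>Th. in_PSK (\<lambda>x. w T (T x)))
   \<and> (\<forall>T1\<in>Th. \<forall>T2\<in>Th. \<forall>p\<in>nodes T1 \<inter> nodes T2. w T1 p = w T2 p)
   \<and> (\<forall>T\<in>Th. \<forall>p\<in>nodes T. p \<in> frontier \<Omega> \<longrightarrow> w T p = 0)"

end

theory Submission
  imports Defs
begin

lemma facepoint_Kref:
  assumes "\<bar>\<sigma>\<bar> \<le> 1" "\<bar>s\<bar> \<le> 1" "\<bar>t\<bar> \<le> 1"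
  shows "facepoint i \<sigma> s t \<in> Kref"
  using assms by (auto simp: Kref_def facepoint_def)

lemma key:
  fixes g :: "real^3 \<Rightarrow> real"
  assumes fp: "\<forall>s t. \<bar>s\<bar> \<le> 1 \<longrightarrow> \<bar>t\<bar> \<le> 1 \<longrightarrow> g (facepoint i \<sigma> s t)
     = d0 + d1 * s + d2 * t + d3 * s * t + d4 * t^2 + a * s^2 + b * s^2 * t"
  shows "face_interp i \<sigma> g = (\<lambda>s t. d0 + d1 * s + (d2+b) * t + d3 * s * t + (d4+a) * t^2)"
  unfolding face_interp_def
proof (rule the_equality)
  show "(\<lambda>s t. d0 + d1 * s + (d2+b) * t + d3 * s * t + (d4+a) * t^2) \<in> face_space \<and>
    (\<forall>s\<in>{-1,1}. \<forall>t\<in>{-1,1}. d0 + d1 * s + (d2+b) * t + d3 * s * t + (d4+a) * t^2 = g (facepoint i \<sigma> s t)) \<and>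
    d0 + d1 * 0 + (d2+b) * 0 + d3 * 0 * 0 + (d4+a) * 0^2 = g (facepoint i \<sigma> 0 0)"
  proof (intro conjI)
    show "(\<lambda>s t. d0 + d1 * s + (d2+b) * t + d3 * s * t + (d4+a) * t^2) \<in> face_space"
      unfolding face_space_def by blast
  qed (use fp in \<open>auto simp: algebra_simps\<close>)
next
  fix f
  assume h: "f \<in> face_space \<and>
    (\<forall>s\<in>{-1,1}. \<forall>t\<in>{-1,1}. f s t = g (facepoint i \<sigma> s t)) \<and> f 0 0 = g (facepoint i \<sigma> 0 0)"
  then obtain e0 e1 e2 e3 e4 where e: "\<And>s t. f s t = e0 + e1 * s + e2 * t + e3 * s * t + e4 * t^2"
    by (auto simp: face_space_def)
  have v: "f 1 1 = g (facepoint i \<sigma> 1 1)" "f 1 (-1) = g (facepoint i \<sigma> 1 (-1))"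
     "f (-1) 1 = g (facepoint i \<sigma> (-1) 1)" "f (-1) (-1) = g (facepoint i \<sigma> (-1) (-1))"
     "f 0 0 = g (facepoint i \<sigma> 0 0)" using h by auto
  have w: "g (facepoint i \<sigma> 1 1) = d0 + d1 + d2 + d3 + d4 + a + b"
    "g (facepoint i \<sigma> 1 (-1)) = d0 + d1 - d2 - d3 + d4 + a - b"
    "g (facepoint i \<sigma> (-1) 1) = d0 - d1 + d2 - d3 + d4 + a + b"
    "g (facepoint i \<sigma> (-1) (-1)) = d0 - d1 - d2 + d3 + d4 + a - b"
    "g (facepoint i \<sigma> 0 0) = d0"
    using fp[rule_format, of 1 1] fp[rule_format, of 1 "-1"] fp[rule_format, of "-1" 1]
      fp[rule_format, of "-1" "-1"] fp[rule_format, of 0 0] by simp_all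
  have eqs: "e0 + e1 + e2 + e3 + e4 = d0 + d1 + d2 + d3 + d4 + a + b"
    "e0 + e1 - e2 - e3 + e4 = d0 + d1 - d2 - d3 + d4 + a - b"
    "e0 - e1 + e2 - e3 + e4 = d0 - d1 + d2 - d3 + d4 + a + b"
    "e0 - e1 - e2 + e3 + e4 = d0 - d1 - d2 + d3 + d4 + a - b"
    "e0 = d0"
    using v w e[of 1 1] e[of 1 "-1"] e[of "-1" 1] e[of "-1" "-1"] e[of 0 0] by simp_all
  have "e1 = d1" "e2 = d2 + b" "e3 = d3" "e4 = d4 + a" using eqs by linarith+
  then show "f = (\<lambda>s t. d0 + d1 * s + (d2+b) * t + d3 * s * t + (d4+a) * t^2)"
    using eqs(5) e by (auto intro!: ext)
qed

lemma key2:
  fixes g :: "real^3 \<Rightarrow> real"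
  assumes "\<And>\<sigma>. \<sigma> \<in> {-1,1} \<Longrightarrow> \<exists>d0 d1 d2 d3 d4. \<forall>s t. \<bar>s\<bar> \<le> 1 \<longrightarrow> \<bar>t\<bar> \<le> 1 \<longrightarrow> g (facepoint i \<sigma> s t)
     = d0 + d1 * s + d2 * t + d3 * s * t + d4 * t^2 + a * s^2 + b * s^2 * t"
    and "\<sigma> \<in> {-1,1}" "\<bar>s\<bar> \<le> 1" "\<bar>t\<bar> \<le> 1"
  shows "g (facepoint i \<sigma> s t) - face_interp i \<sigma> g s t = a * (s^2-t^2) + b * (s^2 * t - t)"
proof -
  obtain d0 d1 d2 d3 d4 where d: "\<forall>s t. \<bar>s\<bar> \<le> 1 \<longrightarrow> \<bar>t\<bar> \<le> 1 \<longrightarrow> g (facepoint i \<sigma> s t)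
     = d0 + d1 * s + d2 * t + d3 * s * t + d4 * t^2 + a * s^2 + b * s^2 * t" using assms(1)[OF assms(2)] by blast
  show ?thesis using key[OF d] d assms(3,4) by (simp add: algebra_simps)
qed

theorem lemma4:
  fixes \<Omega> :: "(real^3) set" and Th :: "(real^3 \<Rightarrow> real^3) set"
    and w :: "(real^3 \<Rightarrow> real^3) \<Rightarrow> real^3 \<Rightarrow> real" and T :: "real^3 \<Rightarrow> real^3"
  assumes "parallelepiped \<Omega>" and "partition_pp \<Omega> Th" and "T \<in> Th" and "NC0h \<Omega> Th w"
  shows "in_PSK (\<lambda>x. w T (T x)) \<and>
    (\<forall>i::3. \<forall>s t. \<bar>s\<bar> \<le> 1 \<longrightarrow> \<bar>t\<bar> \<le> 1 \<longrightarrow>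
       w T (T (facepoint i 1 s t)) - face_interp i 1 (\<lambda>x. w T (T x)) s t
     = w T (T (facepoint i (-1) s t)) - face_interp i (-1) (\<lambda>x. w T (T x)) s t)"
proof -
  define g where "g = (\<lambda>x. w T (T x))"
  have P: "in_PSK g" using assms(3,4) unfolding NC0h_def g_def by blast
  then obtain c :: "nat \<Rightarrow> real" where c: "\<And>x. x \<in> Kref \<Longrightarrow>
     g x = c 0 + c 1 * x$1 + c 2 * x$2 + c 3 * x$3
         + c 4 * (x$1)^2 + c 5 * (x$2)^2 + c 6 * (x$3)^2
         + c 7 * x$1 * x$2 + c 8 * x$2 * x$3 + c 9 * x$3 * x$1
         + c 10 * x$1 * x$2 * x$3 + c 11 * (x$1)^2 * x$2
         + c 12 * (x$2)^2 * x$3 + c 13 * (x$3)^2 * x$1"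
    unfolding in_PSK_def by blast
  have gv: "g (facepoint i \<sigma> s t) = (let x = facepoint i \<sigma> s t in c 0 + c 1 * x$1 + c 2 * x$2 + c 3 * x$3
         + c 4 * (x$1)^2 + c 5 * (x$2)^2 + c 6 * (x$3)^2
         + c 7 * x$1 * x$2 + c 8 * x$2 * x$3 + c 9 * x$3 * x$1
         + c 10 * x$1 * x$2 * x$3 + c 11 * (x$1)^2 * x$2
         + c 12 * (x$2)^2 * x$3 + c 13 * (x$3)^2 * x$1)"
    if "\<sigma> \<in> {-1,1}" "\<bar>s\<bar> \<le> 1" "\<bar>t\<bar> \<le> 1" for i \<sigma> s t
    using c[OF facepoint_Kref] that by (auto simp: Let_def)
  have fp: "facepoint 1 a s t $ 1 = a \<and> facepoint 1 a s t $ 2 = s \<and> facepoint 1 a s t $ 3 = t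
  \<and> facepoint 2 a s t $ 2 = a \<and> facepoint 2 a s t $ 3 = s \<and> facepoint 2 a s t $ 1 = t
  \<and> facepoint 3 a s t $ 3 = a \<and> facepoint 3 a s t $ 1 = s \<and> facepoint 3 a s t $ 2 = t" for a s t
    by (simp add: facepoint_def)
  have main: "\<exists>a b. \<forall>\<sigma> s t. \<sigma> \<in> {-1,1} \<longrightarrow> \<bar>s\<bar> \<le> 1 \<longrightarrow> \<bar>t\<bar> \<le> 1 \<longrightarrow>
     g (facepoint i \<sigma> s t) - face_interp i \<sigma> g s t = a * (s^2-t^2) + b * (s^2 * t - t)" for i :: 3
  proof -
    have "i = 1 \<or> i = 2 \<or> i = 3" using exhaust_3 by blast
    moreover
    { assume i: "i = 1"
      have "\<exists>d0 d1 d2 d3 d4. \<forall>s t. \<bar>s\<bar> \<le> 1 \<longrightarrow> \<bar>t\<bar> \<le> 1 \<longrightarrow> g (facepoint i \<sigma> s t)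
         = d0 + d1 * s + d2 * t + d3 * s * t + d4 * t^2 + c 5 * s^2 + c 12 * s^2 * t" if "\<sigma> \<in> {-1,1}" for \<sigma>
        apply (rule exI[of _ "c 0 + c 1 * \<sigma> + c 4 * \<sigma>^2"], rule exI[of _ "c 2 + c 7 * \<sigma> + c 11 * \<sigma>^2"],
           rule exI[of _ "c 3 + c 9 * \<sigma>"], rule exI[of _ "c 8 + c 10 * \<sigma>"], rule exI[of _ "c 6 + c 13 * \<sigma>"])
        apply (intro allI impI)
        apply (subst gv[OF that], assumption+)
        apply (simp only: i fp Let_def)
        by algebra
      then have ?thesis using key2[where a="c 5" and b="c 12" and i=i and g=g] by (metis (no_types, lifting)) }
    moreover
    { assume i: "i = 2"
      have "\<exists>d0 d1 d2 d3 d4. \<forall>s t. \<bar>s\<bar> \<le> 1 \<longrightarrow> \<bar>t\<bar> \<le> 1 \<longrightarrow> g (facepoint i \<sigma> s t)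
         = d0 + d1 * s + d2 * t + d3 * s * t + d4 * t^2 + c 6 * s^2 + c 13 * s^2 * t" if "\<sigma> \<in> {-1,1}" for \<sigma>
        apply (rule exI[of _ "c 0 + c 2 * \<sigma> + c 5 * \<sigma>^2"], rule exI[of _ "c 3 + c 8 * \<sigma> + c 12 * \<sigma>^2"],
           rule exI[of _ "c 1 + c 7 * \<sigma>"], rule exI[of _ "c 9 + c 10 * \<sigma>"], rule exI[of _ "c 4 + c 11 * \<sigma>"])
        apply (intro allI impI)
        apply (subst gv[OF that], assumption+)
        apply (simp only: i fp Let_def)
        by algebra
      then have ?thesis using key2[where a="c 6" and b="c 13" and i=i and g=g] by (metis (no_types, lifting)) }
    moreover
    { assume i: "i = 3"
      have "\<exists>d0 d1 d2 d3 d4. \<forall>s t. \<bar>s\<bar> \<le> 1 \<longrightarrow> \<bar>t\<bar> \<le> 1 \<longrightarrow> g (facepoint i \<sigma> s t)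
         = d0 + d1 * s + d2 * t + d3 * s * t + d4 * t^2 + c 4 * s^2 + c 11 * s^2 * t" if "\<sigma> \<in> {-1,1}" for \<sigma>
        apply (rule exI[of _ "c 0 + c 3 * \<sigma> + c 6 * \<sigma>^2"], rule exI[of _ "c 1 + c 9 * \<sigma> + c 13 * \<sigma>^2"],
           rule exI[of _ "c 2 + c 8 * \<sigma>"], rule exI[of _ "c 7 + c 10 * \<sigma>"], rule exI[of _ "c 5 + c 12 * \<sigma>"])
        apply (intro allI impI)
        apply (subst gv[OF that], assumption+)
        apply (simp only: i fp Let_def)
        by algebra
      then have ?thesis using key2[where a="c 4" and b="c 11" and i=i and g=g] by (metis (no_types, lifting)) }
    ultimately show ?thesis by blast
  qed
  show ?thesis
  proof (intro conjI allI impI)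
    show "in_PSK (\<lambda>x. w T (T x))" using P by (simp add: g_def)
    fix i :: 3 and s t :: real assume st: "\<bar>s\<bar> \<le> 1" "\<bar>t\<bar> \<le> 1"
    obtain a b where ab: "\<forall>\<sigma> s t. \<sigma> \<in> {-1,1} \<longrightarrow> \<bar>s\<bar> \<le> 1 \<longrightarrow> \<bar>t\<bar> \<le> 1 \<longrightarrow>
     g (facepoint i \<sigma> s t) - face_interp i \<sigma> g s t = a * (s^2-t^2) + b * (s^2 * t - t)"
      using main by blast
    show "w T (T (facepoint i 1 s t)) - face_interp i 1 (\<lambda>x. w T (T x)) s t
     = w T (T (facepoint i (-1) s t)) - face_interp i (-1) (\<lambda>x. w T (T x)) s t"
      using ab[rule_format, of 1 s t] ab[rule_format, of "-1" s t] st by (simp add: g_def)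
  qed
qed

end
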